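(* Let $f=h+\overline{g}$ be harmonic in $\mathbb{C}$, where $h$ and $g$ are entire holomorphic functions. If $f(S)\cup C(f,\infty)$ has empty interior, then either (i) $h$ and $g$ are both polynomials in $z$, or (ii) $h$ and $g$ are both entire transcendental functions.
   Context: Writing $f=u+iv$, $J_f=u_xv_y-u_yv_x$ and $S=\{z\in\mathbb{C}: J_f(z)=0\}$. $C(f,\infty)$ is the set of finite points $\zeta\in\mathbb{C}$ for which there is a sequence $(z_n)$ with $|z_n|\to\infty$ and $f(z_n)\to\zeta$. *)

theory Defs
  imports "HOL-Complex_Analysis.Complex_Analysis" "HOL-Computational_Algebra.Polynomial"
begin

definition re_part :: "(complex \<Rightarrow> complex) \<Rightarrow> real \<Rightarrow> real \<Rightarrow> real" where
  "re_part f x y = Re (f (Complex x y))"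

definition im_part :: "(complex \<Rightarrow> complex) \<Rightarrow> real \<Rightarrow> real \<Rightarrow> real" where
  "im_part f x y = Im (f (Complex x y))"

definition jacobian_f :: "(complex \<Rightarrow> complex) \<Rightarrow> complex \<Rightarrow> real" where
  "jacobian_f f z =
     deriv (\<lambda>x. re_part f x (Im z)) (Re z) * deriv (\<lambda>y. im_part f (Re z) y) (Im z)
   - deriv (\<lambda>y. re_part f (Re z) y) (Im z) * deriv (\<lambda>x. im_part f x (Im z)) (Re z)"

definition crit_set :: "(complex \<Rightarrow> complex) \<Rightarrow> complex set" where
  "crit_set f = {z. jacobian_f f z = 0}"

definition cluster_set_infty :: "(complex \<Rightarrow> complex) \<Rightarrow> complex set" where
  "cluster_set_infty f = {\<zeta>. \<exists>zs :: nat \<Rightarrow> complex.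
      filterlim (\<lambda>n. norm (zs n)) at_top sequentially \<and> (\<lambda>n. f (zs n)) \<longlonglongrightarrow> \<zeta>}"

definition is_polynomial_fun :: "(complex \<Rightarrow> complex) \<Rightarrow> bool" where
  "is_polynomial_fun h \<longleftrightarrow> (\<exists>p :: complex poly. h = poly p)"

end

theory Submission
  imports Defs
begin



lemma poly_growth_imp_poly:
  assumes holg: "g holomorphic_on UNIV"
    and bnd: "\<And>z. A \<le> norm z \<Longrightarrow> norm (g z) \<le> B * norm z ^ n"
  shows "is_polynomial_fun g"
proof -
  define c where "c k = (deriv ^^ k) g 0 / fact k" for k
  have eq: "g x = (\<Sum>k\<le>n. c k * x ^ k)" for x
    using Liouville_polynomial[OF holg bnd] unfolding c_def by blast
  define p where "p = (\<Sum>k\<le>n. monom (c k) k)"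
  have "poly p x = g x" for x
    unfolding p_def eq by (simp add: poly_sum poly_monom)
  then show ?thesis unfolding is_polynomial_fun_def by (intro exI[of _ p]) auto
qed

lemma prod_list_norm_le:
  fixes z :: complex
  assumes "\<And>a. a \<in> set as \<Longrightarrow> norm (z - a) \<le> B"
  shows "norm (\<Prod>a\<leftarrow>as. (z - a)) \<le> B ^ length as"
  using assms
proof (induction as)
  case Nil then show ?case by simp
next
  case (Cons a as)
  have B0: "0 \<le> B" using Cons.prems[of a] norm_ge_zero[of "z-a"] by (meson list.set_intros(1) order_trans)
  have "norm (\<Prod>a\<leftarrow>a # as. (z - a)) = norm (z - a) * norm (\<Prod>a\<leftarrow>as. (z - a))"
    by (simp add: norm_mult)
  also have "\<dots> \<le> B * B ^ length as"
    using Cons B0 by (intro mult_mono) auto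
  finally show ?case by simp
qed

lemma prod_list_norm_ge:
  fixes z :: complex
  assumes "\<And>a. a \<in> set as \<Longrightarrow> \<rho> \<le> norm (z - a)" "0 \<le> \<rho>"
  shows "\<rho> ^ length as \<le> norm (\<Prod>a\<leftarrow>as. (z - a))"
  using assms
proof (induction as)
  case Nil then show ?case by simp
next
  case (Cons a as)
  have "\<rho> * \<rho> ^ length as \<le> norm (z - a) * norm (\<Prod>a\<leftarrow>as. (z - a))"
    using Cons by (intro mult_mono) auto
  then show ?case by (simp add: norm_mult)
qed

lemma min_modulus_cball:
  fixes E :: "complex \<Rightarrow> complex"
  assumes holE: "E holomorphic_on UNIV" and nz: "\<And>z. z \<in> cball 0 r \<Longrightarrow> E z \<noteq> 0"
    and r: "0 < r" and m: "0 < m" and bd: "\<And>z. z \<in> sphere 0 r \<Longrightarrow> m \<le> norm (E z)"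
    and z: "z \<in> cball 0 r"
  shows "m \<le> norm (E z)"
proof -
  have hol: "(\<lambda>w. 1 / E w) holomorphic_on interior (cball 0 r)"
    using nz by (intro holomorphic_intros holomorphic_on_subset[OF holE]) auto
  have cont: "continuous_on (closure (cball 0 r)) (\<lambda>w. 1 / E w)"
    using nz by (intro continuous_intros holomorphic_on_imp_continuous_on holomorphic_on_subset[OF holE]) auto
  have "norm (1 / E z) \<le> 1 / m"
  proof (rule maximum_modulus_frontier[OF hol cont])
    show "bounded (cball (0::complex) r)" by simp
    fix w assume "w \<in> frontier (cball (0::complex) r)"
    then have "w \<in> sphere 0 r" using r by (simp add: frontier_cball)
    then have "m \<le> norm (E w)" by (rule bd)
    then show "norm (1 / E w) \<le> 1 / m" using m by (simp add: norm_divide divide_simps)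
  qed (use z in auto)
  then show ?thesis using m nz[OF z] by (simp add: norm_divide divide_simps)
qed



lemma norm_minus_lt_plus:
  fixes u :: complex
  assumes "0 < Re u" "0 < b"
  shows "cmod (u - of_real b) < cmod (u + of_real b)"
proof -
  have "cmod (u - of_real b) ^ 2 = (Re u - b)^2 + (Im u)^2" by (simp add: cmod_power2)
  moreover have "cmod (u + of_real b) ^ 2 = (Re u + b)^2 + (Im u)^2" by (simp add: cmod_power2)
  moreover have "(Re u - b)^2 < (Re u + b)^2" using assms by (simp add: power2_eq_square algebra_simps)
  ultimately have "cmod (u - of_real b) ^ 2 < cmod (u + of_real b) ^ 2" by simp
  then show ?thesis by (rule power_less_imp_less_base) simp
qed

lemma harnack_bound:
  fixes E :: "complex \<Rightarrow> complex"
  assumes holE: "E holomorphic_on UNIV" and r: "0 < r" and m: "0 < m"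
    and bd: "\<And>z. z \<in> cball 0 r \<Longrightarrow> m \<le> norm (E z)"
    and z: "norm z \<le> r/2"
  shows "norm (E z) \<le> norm (E 0)^3 / m^2"
proof -
  have nzE: "E w / of_real m \<noteq> 0" if "w \<in> ball 0 r" for w
    using bd[of w] that m by auto
  obtain L where holL: "L holomorphic_on ball 0 r"
    and L: "\<And>w. w \<in> ball 0 r \<Longrightarrow> E w / of_real m = exp (L w)"
  proof (rule contractible_imp_holomorphic_log[of "\<lambda>w. E w / of_real m" "ball 0 r"])
    show "(\<lambda>w. E w / complex_of_real m) holomorphic_on ball 0 r"
      by (intro holomorphic_intros holomorphic_on_subset[OF holE]) auto
    show "contractible (ball (0::complex) r)" by (simp add: convex_imp_contractible)
  qed (use nzE in auto)
  have expRe: "exp (Re (L w)) = norm (E w) / m" if "w \<in> ball 0 r" for w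
  proof -
    have "norm (exp (L w)) = norm (E w / of_real m)" using L[OF that] by simp
    then show ?thesis using m by (simp add: norm_exp_eq_Re norm_divide)
  qed
  have ReL0: "0 \<le> Re (L w)" if "w \<in> ball 0 r" for w
  proof -
    have "1 \<le> norm (E w) / m" using bd[of w] that m by auto
    then show ?thesis using expRe[OF that] by (metis one_le_exp_iff)
  qed
  have zb: "z \<in> ball 0 r" using z r by simp
  have key: "Re (L z) \<le> 3 * Re (L 0) + 2 * \<delta>" if d: "0 < \<delta>" for \<delta>
  proof -
    define b where "b = Re (L 0) + \<delta>"
    have b: "0 < b" using ReL0[of 0] r d unfolding b_def by auto
    define Mf where "Mf w = L w - \<i> * of_real (Im (L 0)) + of_real \<delta>" for w
    have ReM: "0 < Re (Mf w)" if "w \<in> ball 0 r" for w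
      using ReL0[OF that] d unfolding Mf_def by simp
    have M0: "Mf 0 = of_real b" unfolding Mf_def b_def by (simp add: complex_eq_iff)
    define \<phi> where "\<phi> w = (Mf (of_real r * w) - of_real b) / (Mf (of_real r * w) + of_real b)" for w
    have img: "of_real r * w \<in> ball 0 r" if "w \<in> ball 0 1" for w :: complex
    proof -
      have "norm w < 1" using that by simp
      then have "norm (of_real r * w) < r" using r by (simp add: norm_mult)
      then show ?thesis by simp
    qed
    have nzden: "Mf (of_real r * w) + of_real b \<noteq> 0" if "w \<in> ball 0 1" for w
    proof
      assume "Mf (of_real r * w) + of_real b = 0"
      then have "Re (Mf (of_real r * w)) + b = 0" by (metis Re_complex_of_real plus_complex.simps(1) zero_complex.sel(1))
      with ReM[OF img[OF that]] b show False by simp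
    qed
    have holLr: "(\<lambda>w. L (of_real r * w)) holomorphic_on ball 0 1"
    proof -
      have "(L \<circ> (\<lambda>w. of_real r * w)) holomorphic_on ball 0 1"
        by (rule holomorphic_on_compose_gen[OF _ holL]) (use img in \<open>auto intro!: holomorphic_intros\<close>)
      then show ?thesis by (simp add: o_def)
    qed
    have hol\<phi>: "\<phi> holomorphic_on ball 0 1"
      unfolding \<phi>_def Mf_def using nzden unfolding Mf_def
      by (intro holomorphic_intros holLr) auto
    have \<phi>0: "\<phi> 0 = 0" unfolding \<phi>_def using M0 by simp
    have \<phi>lt: "norm (\<phi> w) < 1" if "norm w < 1" for w
    proof -
      have wb: "w \<in> ball 0 1" using that by simp
      have "cmod (Mf (of_real r * w) - of_real b) < cmod (Mf (of_real r * w) + of_real b)"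
        by (rule norm_minus_lt_plus[OF ReM[OF img[OF wb]] b])
      then show ?thesis unfolding \<phi>_def using nzden[OF wb] by (simp add: norm_divide divide_simps)
    qed
    define \<xi> where "\<xi> = z / of_real r"
    have \<xi>: "norm \<xi> \<le> 1/2" unfolding \<xi>_def using z r by (simp add: norm_divide divide_simps)
    have \<xi>1: "norm \<xi> < 1" using \<xi> by simp
    have s: "norm (\<phi> \<xi>) \<le> norm \<xi>"
      using Schwarz_Lemma(1)[OF hol\<phi> \<phi>0 \<phi>lt \<xi>1] by simp
    have rz: "of_real r * \<xi> = z" unfolding \<xi>_def using r by simp
    define u where "u = Mf z"
    have nz: "u + of_real b \<noteq> 0" using nzden[of \<xi>] \<xi>1 rz unfolding u_def by simp
    have phiu: "\<phi> \<xi> = (u - of_real b) / (u + of_real b)" unfolding \<phi>_def u_def rz ..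
    have equ: "u * (1 - \<phi> \<xi>) = of_real b * (1 + \<phi> \<xi>)"
      using nz unfolding phiu by (simp add: field_simps)
    have n1: "norm (1 + \<phi> \<xi>) \<le> 3/2"
      using norm_triangle_ineq[of 1 "\<phi> \<xi>"] s \<xi> by simp
    have n2: "1/2 \<le> norm (1 - \<phi> \<xi>)"
      using norm_triangle_ineq2[of 1 "\<phi> \<xi>"] s \<xi> by simp
    have "norm u * norm (1 - \<phi> \<xi>) = b * norm (1 + \<phi> \<xi>)"
      using equ b by (metis norm_mult norm_of_real abs_of_pos)
    also have "\<dots> \<le> b * (3/2)" using n1 b by simp
    finally have "norm u * norm (1 - \<phi> \<xi>) \<le> b * (3/2)" .
    moreover have "norm u * (1/2) \<le> norm u * norm (1 - \<phi> \<xi>)"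
      using n2 by (intro mult_left_mono) auto
    ultimately have "norm u \<le> 3 * b" by simp
    moreover have "Re u \<le> norm u" by (rule complex_Re_le_cmod)
    moreover have "Re u = Re (L z) + \<delta>" unfolding u_def Mf_def by simp
    ultimately show ?thesis unfolding b_def by simp
  qed
  have ReLz: "Re (L z) \<le> 3 * Re (L 0)"
  proof (rule field_le_epsilon)
    fix e :: real assume "0 < e"
    then show "Re (L z) \<le> 3 * Re (L 0) + e" using key[of "e/2"] by simp
  qed
  have "norm (E z) / m = exp (Re (L z))" using expRe[OF zb] by simp
  also have "\<dots> \<le> exp (3 * Re (L 0))" using ReLz by simp
  also have "\<dots> = exp (Re (L 0)) ^ 3" by (metis exp_of_nat_mult of_nat_numeral)
  also have "\<dots> = (norm (E 0) / m) ^ 3" using expRe[of 0] r by simp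
  finally have "norm (E z) / m \<le> (norm (E 0) / m) ^ 3" .
  then show ?thesis using m by (simp add: field_simps power_divide power2_eq_square power3_eq_cube)
qed



lemma LD_integrable:
  fixes G :: "complex \<Rightarrow> complex"
  assumes holG: "G holomorphic_on UNIV" and nz: "\<And>z. z \<in> sphere 0 r \<Longrightarrow> G z \<noteq> 0" and r: "0 \<le> r"
  shows "(\<lambda>z. deriv G z / G z) contour_integrable_on circlepath 0 r"
proof (rule contour_integrable_continuous_circlepath)
  have dG: "deriv G holomorphic_on UNIV" using holG by (rule holomorphic_deriv) simp
  show "continuous_on (path_image (circlepath 0 r)) (\<lambda>z. deriv G z / G z)"
    using nz r
    by (intro continuous_intros holomorphic_on_imp_continuous_on holomorphic_on_subset[OF dG]
        holomorphic_on_subset[OF holG]) auto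
qed

lemma arg_count:
  fixes G :: "complex \<Rightarrow> complex"
  assumes holG: "G holomorphic_on UNIV" and r: "0 < r" and nz: "\<And>z. z \<in> sphere 0 r \<Longrightarrow> G z \<noteq> 0"
  shows "\<exists>N::nat. contour_integral (circlepath 0 r) (\<lambda>z. deriv G z / G z) = 2 * pi * \<i> * of_nat N
           \<and> (N = 0 \<longleftrightarrow> (\<forall>z\<in>ball 0 r. G z \<noteq> 0))"
proof (cases "G constant_on UNIV")
  case True
  then obtain c where c: "\<And>z. G z = c" unfolding constant_on_def by blast
  have "G (of_real r) \<noteq> 0" using nz[of "of_real r"] r by simp
  then have c0: "c \<noteq> 0" using c by simp
  have Geq: "G = (\<lambda>_. c)" using c by auto
  have "deriv G = (\<lambda>_. 0)" unfolding Geq by (simp add: fun_eq_iff)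
  then have "contour_integral (circlepath 0 r) (\<lambda>z. deriv G z / G z) = 0" by simp
  then show ?thesis using c c0 by (intro exI[of _ 0]) auto
next
  case False
  define S where "S = ball (0::complex) (r + 1)"
  define pz where "pz = {w\<in>S. G w = 0 \<or> w \<in> {}}"
  have finK: "finite {z\<in>cball 0 (r+1). G z = 0}"
    by (rule holomorphic_compact_finite_zeros[OF holG open_UNIV connected_UNIV compact_cball subset_UNIV False])
  have finpz: "finite pz" by (rule finite_subset[OF _ finK]) (auto simp: pz_def S_def)
  have homo: "\<forall>z. z \<notin> S \<longrightarrow> winding_number (circlepath 0 r) z = 0"
  proof (intro allI impI)
    fix z assume "z \<notin> S"
    then have "z \<notin> cball 0 r" using r by (auto simp: S_def)
    then show "winding_number (circlepath 0 r) z = 0"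
      using r by (intro winding_number_zero_outside[of _ "cball 0 r"]) auto
  qed
  have pimg: "path_image (circlepath 0 r) \<subseteq> S - pz"
    using r nz by (auto simp: S_def pz_def)
  have AP: "contour_integral (circlepath 0 r) (\<lambda>x. deriv G x * 1 / G x) =
       2 * pi * \<i> * (\<Sum>p\<in>pz. winding_number (circlepath 0 r) p * 1 * zorder G p)"
    unfolding pz_def
    by (rule argument_principle[of S G "{}" "\<lambda>_. 1" "circlepath 0 r"])
       (use finpz pimg homo holG in \<open>auto simp: S_def pz_def intro: holomorphic_on_subset\<close>)
  define Z where "Z = {p\<in>ball 0 r. G p = 0}"
  have ZS: "Z = pz \<inter> ball 0 r" using r by (auto simp: Z_def pz_def S_def)
  have finZ: "finite Z" using ZS finpz by simp
  have nonc: "\<exists>w\<in>S. G w \<noteq> 0" using nz[of "of_real r"] r by (intro bexI[of _ "of_real r"]) (auto simp: S_def)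
  have zpos: "zorder G p > 0" if "p \<in> Z" for p
  proof -
    have "p \<in> S" using that r by (auto simp: Z_def S_def)
    then show ?thesis
      using zorder_exist_zero[OF holomorphic_on_subset[OF holG] _ _ _ nonc, of p] that
      by (auto simp: S_def Z_def)
  qed
  have wind: "winding_number (circlepath 0 r) p * 1 * of_int (zorder G p) =
      (if p \<in> ball 0 r then of_int (zorder G p) else 0)" if "p \<in> pz" for p
  proof (cases "p \<in> ball 0 r")
    case True
    then have "winding_number (circlepath 0 r) p = 1" by (intro winding_number_circlepath) auto
    then show ?thesis using True by simp
  next
    case False
    moreover have "p \<notin> sphere 0 r" using that pimg by auto
    ultimately have "p \<notin> cball 0 r" by auto
    then have "winding_number (circlepath 0 r) p = 0"
      using r by (intro winding_number_zero_outside[of _ "cball 0 r"]) auto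
    then show ?thesis using False by simp
  qed
  define N where "N = (\<Sum>p\<in>Z. nat (zorder G p))"
  have "(\<Sum>p\<in>pz. winding_number (circlepath 0 r) p * 1 * of_int (zorder G p))
      = (\<Sum>p\<in>pz. (if p \<in> ball 0 r then of_int (zorder G p) else 0))"
    using wind by (rule sum.cong[OF refl])
  also have "\<dots> = (\<Sum>p\<in>pz \<inter> ball 0 r. of_int (zorder G p))"
    using finpz by (simp add: sum.inter_restrict)
  also have "\<dots> = (\<Sum>p\<in>Z. of_int (zorder G p))" using ZS by simp
  also have "\<dots> = (\<Sum>p\<in>Z. of_nat (nat (zorder G p)))"
  proof (rule sum.cong[OF refl])
    fix x assume "x \<in> Z"
    then have "0 \<le> zorder G x" using zpos[of x] by simp
    then show "(of_int (zorder G x)::complex) = of_nat (nat (zorder G x))" by (simp add: of_nat_nat)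
  qed
  also have "\<dots> = of_nat N" unfolding N_def by simp
  finally have eqs: "(\<Sum>p\<in>pz. winding_number (circlepath 0 r) p * 1 * of_int (zorder G p)) = of_nat N" .
  have "N = 0 \<longleftrightarrow> Z = {}"
    unfolding N_def using finZ zpos by (auto simp: sum_eq_0_iff) (meson not_le)
  then have "N = 0 \<longleftrightarrow> (\<forall>z\<in>ball 0 r. G z \<noteq> 0)" unfolding Z_def by auto
  moreover have "contour_integral (circlepath 0 r) (\<lambda>z. deriv G z / G z) = 2 * pi * \<i> * of_nat N"
    using AP eqs by simp
  ultimately show ?thesis by blast
qed


lemma factor_zeros:
  fixes G :: "complex \<Rightarrow> complex"
  assumes "G holomorphic_on UNIV" "0 < r" "\<And>z. z \<in> sphere 0 r \<Longrightarrow> G z \<noteq> 0"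
    "contour_integral (circlepath 0 r) (\<lambda>z. deriv G z / G z) = 2 * pi * \<i> * of_nat N"
  shows "\<exists>as E. length as = N \<and> (\<forall>a\<in>set as. norm a < r \<and> G a = 0) \<and> E holomorphic_on UNIV
     \<and> (\<forall>z\<in>cball 0 r. E z \<noteq> 0) \<and> (\<forall>z. G z = (\<Prod>a\<leftarrow>as. (z - a)) * E z)"
  using assms
proof (induction N arbitrary: G)
  case 0
  obtain N' where N': "contour_integral (circlepath 0 r) (\<lambda>z. deriv G z / G z) = 2 * pi * \<i> * of_nat N'"
    "N' = 0 \<longleftrightarrow> (\<forall>z\<in>ball 0 r. G z \<noteq> 0)"
    using arg_count[OF "0.prems"(1,2,3)] by blast
  have "N' = 0" using N'(1) "0.prems"(4) by simp
  then have "\<forall>z\<in>cball 0 r. G z \<noteq> 0" using N'(2) "0.prems"(3) by (auto simp: less_le)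
  then show ?case using "0.prems"(1) by (intro exI[of _ "[]"] exI[of _ G]) auto
next
  case (Suc M)
  note holG = Suc.prems(1) and r = Suc.prems(2) and nz = Suc.prems(3)
  obtain N' where N': "contour_integral (circlepath 0 r) (\<lambda>z. deriv G z / G z) = 2 * pi * \<i> * of_nat N'"
    "N' = 0 \<longleftrightarrow> (\<forall>z\<in>ball 0 r. G z \<noteq> 0)"
    using arg_count[OF holG r nz] by blast
  have "of_nat N' = (of_nat (Suc M) :: complex)" using N'(1) Suc.prems(4) by simp
  then have "N' = Suc M" using of_nat_eq_iff by blast
  then obtain a where a: "a \<in> ball 0 r" "G a = 0" using N'(2) by auto
  define G1 where "G1 z = (if z = a then deriv G a else G z / (z - a))" for z
  have "(\<lambda>z. if z = a then deriv G a else (G z - G a) / (z - a)) holomorphic_on UNIV"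
    by (rule pole_lemma[OF holG]) simp
  moreover have "G1 = (\<lambda>z. if z = a then deriv G a else (G z - G a) / (z - a))"
    unfolding G1_def using a(2) by (simp add: fun_eq_iff)
  ultimately have holG1: "G1 holomorphic_on UNIV" by simp
  have Geq: "G z = (z - a) * G1 z" for z unfolding G1_def using a(2) by auto
  have Gfun: "G = (\<lambda>z. (z - a) * G1 z)" using Geq by auto
  have dG1: "G1 field_differentiable at z" for z
    using holG1 holomorphic_on_imp_differentiable_at by blast
  have dG: "deriv G z = G1 z + (z - a) * deriv G1 z" for z
  proof -
    have "deriv G z = deriv (\<lambda>z. (z - a) * G1 z) z" using Gfun by simp
    also have "\<dots> = (z - a) * deriv G1 z + deriv (\<lambda>z. z - a) z * G1 z"
      by (rule deriv_mult) (auto intro!: derivative_intros dG1)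
    also have "deriv (\<lambda>z. z - a) z = 1" by (auto intro!: DERIV_imp_deriv derivative_eq_intros)
    finally show ?thesis by simp
  qed
  have nz1: "G1 z \<noteq> 0" if "z \<in> sphere 0 r" for z using nz[OF that] Geq[of z] by auto
  have za: "z \<noteq> a" if "z \<in> sphere 0 r" for z using that a(1) by auto
  have split: "deriv G z / G z = deriv G1 z / G1 z + 1 / (z - a)" if "z \<in> sphere 0 r" for z
    using nz1[OF that] za[OF that] unfolding dG Geq by (simp add: field_simps)
  have int1: "(\<lambda>z. deriv G1 z / G1 z) contour_integrable_on circlepath 0 r"
    using LD_integrable[OF holG1 nz1] r by simp
  have int2: "(\<lambda>z. 1 / (z - a)) contour_integrable_on circlepath 0 r"
    using za r by (intro contour_integrable_continuous_circlepath continuous_intros) auto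
  have wa: "winding_number (circlepath 0 r) a = 1" using a(1) by (intro winding_number_circlepath) auto
  have "winding_number (circlepath 0 r) a = 1/(2*pi*\<i>) * contour_integral (circlepath 0 r) (\<lambda>w. 1/(w - a))"
    using a(1) by (intro winding_number_valid_path) auto
  then have ci2: "contour_integral (circlepath 0 r) (\<lambda>w. 1/(w - a)) = 2 * pi * \<i>"
    using wa by (simp add: field_simps)
  have "contour_integral (circlepath 0 r) (\<lambda>z. deriv G z / G z) =
        contour_integral (circlepath 0 r) (\<lambda>z. deriv G1 z / G1 z + 1 / (z - a))"
    using r by (intro contour_integral_eq) (simp add: split)
  also have "\<dots> = contour_integral (circlepath 0 r) (\<lambda>z. deriv G1 z / G1 z) + 2 * pi * \<i>"
    using contour_integral_add[OF int1 int2] ci2 by simp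
  finally have "contour_integral (circlepath 0 r) (\<lambda>z. deriv G1 z / G1 z) = 2 * pi * \<i> * of_nat M"
    using Suc.prems(4) by (simp add: algebra_simps)
  then obtain as E where IH: "length as = M" "\<forall>a\<in>set as. norm a < r \<and> G1 a = 0" "E holomorphic_on UNIV"
     "\<forall>z\<in>cball 0 r. E z \<noteq> 0" "\<forall>z. G1 z = (\<Prod>a\<leftarrow>as. (z - a)) * E z"
    using Suc.IH[OF holG1 r nz1] by blast
  show ?case
  proof (intro exI[of _ "a # as"] exI[of _ E] conjI)
    show "\<forall>b\<in>set (a # as). norm b < r \<and> G b = 0" using IH(2) a Geq by auto
    show "\<forall>z. G z = (\<Prod>a\<leftarrow>a # as. (z - a)) * E z" using IH(5) Geq by (simp add: mult.assoc)
  qed (use IH in auto)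
qed





lemma core_bound:
  fixes G E :: "complex \<Rightarrow> complex"
  assumes holE: "E holomorphic_on UNIV" and r: "0 < r" and mu: "0 < \<mu>"
   and asr: "\<forall>a\<in>set as. norm a \<le> r" and Enz: "\<forall>z\<in>cball 0 r. E z \<noteq> 0"
   and Geq: "\<forall>z. G z = (\<Prod>a\<leftarrow>as. (z - a)) * E z"
   and Gbd: "\<And>z. z \<in> sphere 0 r \<Longrightarrow> \<mu> \<le> norm (G z)"
   and z: "norm z \<le> r/2"
  shows "norm (G z) \<le> (2*r)^(3 * length as) * norm (E 0)^3 / \<mu>^2"
proof -
  define K where "K = length as"
  define m where "m = \<mu> / (2*r)^K"
  have m: "0 < m" unfolding m_def using mu r by simp
  have Pb: "norm (\<Prod>a\<leftarrow>as. (w - a)) \<le> (2*r)^K" if "norm w \<le> r" for w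
    unfolding K_def
  proof (rule prod_list_norm_le)
    fix a assume "a \<in> set as"
    then have "norm a \<le> r" using asr by auto
    then show "norm (w - a) \<le> 2 * r" using norm_triangle_ineq4[of w a] that by linarith
  qed
  have Esph: "m \<le> norm (E w)" if "w \<in> sphere 0 r" for w
  proof -
    have "\<mu> \<le> norm (G w)" using Gbd[OF that] .
    also have "\<dots> = norm (\<Prod>a\<leftarrow>as. (w - a)) * norm (E w)" using Geq by (simp add: norm_mult)
    also have "\<dots> \<le> (2*r)^K * norm (E w)"
      using Pb[of w] that by (intro mult_right_mono) auto
    finally show ?thesis unfolding m_def using r by (simp add: divide_simps mult.commute)
  qed
  have Ecb: "m \<le> norm (E w)" if "w \<in> cball 0 r" for w
    by (rule min_modulus_cball[OF holE _ r m Esph that]) (use Enz in auto)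
  have Ez: "norm (E z) \<le> norm (E 0)^3 / m^2"
    by (rule harnack_bound[OF holE r m Ecb z]) auto
  have "norm (G z) = norm (\<Prod>a\<leftarrow>as. (z - a)) * norm (E z)" using Geq by (simp add: norm_mult)
  also have "\<dots> \<le> (2*r)^K * (norm (E 0)^3 / m^2)"
    using Pb[of z] z r Ez by (intro mult_mono) auto
  also have "\<dots> = (2*r)^(3*K) * norm (E 0)^3 / \<mu>^2"
    unfolding m_def using r mu by (simp add: field_simps power_mult_distrib power_mult[symmetric] power_add[symmetric])
  finally show ?thesis unfolding K_def .
qed

lemma main_deg0:
  fixes g :: "complex \<Rightarrow> complex" and c :: complex
  assumes holg: "g holomorphic_on UNIV" and eps: "0 < \<epsilon>"
    and bd: "\<And>z. R \<le> norm z \<Longrightarrow> \<epsilon> \<le> norm (c + cnj (g z))"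
  shows "is_polynomial_fun g"
proof -
  define R' where "R' = max R 2"
  define G where "G z = g z + cnj c" for z
  have nG: "norm (G z) = norm (c + cnj (g z))" for z
  proof -
    have "norm (G z) = norm (cnj (G z))" by simp
    also have "cnj (G z) = c + cnj (g z)" unfolding G_def by simp
    finally show ?thesis .
  qed
  have Gbd: "\<epsilon> \<le> norm (G z)" if "R' \<le> norm z" for z
    using bd[of z] that nG[of z] unfolding R'_def by simp
  have holG: "G holomorphic_on UNIV" unfolding G_def by (intro holomorphic_intros holg)
  have R'0: "0 < R'" "2 \<le> R'" unfolding R'_def by auto
  have nzs: "G z \<noteq> 0" if "z \<in> sphere 0 R'" for z using Gbd[of z] that eps by auto
  obtain N where N: "contour_integral (circlepath 0 R') (\<lambda>z. deriv G z / G z) = 2 * pi * \<i> * of_nat N"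
    using arg_count[OF holG R'0(1) nzs] by blast
  obtain as E where fac: "length as = N" "\<forall>a\<in>set as. norm a < R' \<and> G a = 0" "E holomorphic_on UNIV"
     "\<forall>z\<in>cball 0 R'. E z \<noteq> 0" "\<forall>z. G z = (\<Prod>a\<leftarrow>as. (z - a)) * E z"
    using factor_zeros[OF holG R'0(1) nzs N] by blast
  have Enz: "E z \<noteq> 0" for z
  proof (cases "norm z \<le> R'")
    case True then show ?thesis using fac(4) by auto
  next
    case False
    then have "G z \<noteq> 0" using Gbd[of z] eps by auto
    then show ?thesis using fac(5) by auto
  qed
  define K where "K = length as"
  define B where "B = 4^(3*K) * norm (E 0)^3 / \<epsilon>^2 + norm c"
  have gb: "norm (g z) \<le> B * norm z ^ (3*K)" if z: "R'/2 \<le> norm z" for z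
  proof -
    define r where "r = 2 * norm z"
    have r: "0 < r" "R' \<le> r" using z R'0 unfolding r_def by auto
    have z1: "1 \<le> norm z" using z R'0 by simp
    have "norm (G z) \<le> (2*r)^(3 * length as) * norm (E 0)^3 / \<epsilon>^2"
    proof (rule core_bound[OF fac(3) r(1) eps _ _ fac(5)])
      show "\<forall>a\<in>set as. norm a \<le> r" using fac(2) r by force
      show "\<forall>z\<in>cball 0 r. E z \<noteq> 0" using Enz by auto
      show "\<epsilon> \<le> norm (G w)" if "w \<in> sphere 0 r" for w using Gbd[of w] that r by auto
      show "norm z \<le> r / 2" unfolding r_def by simp
    qed
    also have "(2*r)^(3 * length as) = 4^(3*K) * norm z ^ (3*K)"
      unfolding r_def K_def by (simp add: power_mult_distrib)
    finally have Gz: "norm (G z) \<le> 4^(3*K) * norm (E 0)^3 / \<epsilon>^2 * norm z ^ (3*K)" by (simp add: field_simps)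
    have "g z = G z - cnj c" unfolding G_def by simp
    then have "norm (g z) \<le> norm (G z) + norm c" by (metis norm_triangle_ineq4 complex_mod_cnj)
    also have "norm c \<le> norm c * norm z ^ (3*K)"
      using z1 by (metis mult_left_mono mult.right_neutral norm_ge_zero one_le_power)
    finally show ?thesis using Gz unfolding B_def by (simp add: algebra_simps)
  qed
  show ?thesis by (rule poly_growth_imp_poly[OF holg gb])
qed


definition Gr_fun :: "complex poly \<Rightarrow> (complex \<Rightarrow> complex) \<Rightarrow> real \<Rightarrow> complex \<Rightarrow> complex" where
  "Gr_fun p g r z = z ^ degree p * g z
     + (\<Sum>k\<le>degree p. cnj (coeff p k) * of_real r ^ (2*k) * z ^ (degree p - k))"

lemma Gr_sphere:
  assumes "norm z = r"
  shows "Gr_fun p g r z = z ^ degree p * cnj (poly p z + cnj (g z))"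
proof -
  define n where "n = degree p"
  have zz: "z * cnj z = of_real r ^ 2" using assms complex_norm_square[of z] by simp
  have "z ^ n * cnj (poly p z) = z ^ n * (\<Sum>k\<le>n. cnj (coeff p k) * cnj z ^ k)"
    unfolding poly_altdef n_def by (simp add: cnj_sum)
  also have "\<dots> = (\<Sum>k\<le>n. cnj (coeff p k) * of_real r ^ (2*k) * z ^ (n - k))"
    unfolding sum_distrib_left
  proof (rule sum.cong[OF refl])
    fix k assume "k \<in> {..n}"
    then have kn: "k \<le> n" by simp
    have "z ^ n * cnj z ^ k = z ^ (n - k) * (z * cnj z) ^ k"
      using kn by (simp add: power_mult_distrib power_add[symmetric])
    also have "\<dots> = z ^ (n - k) * of_real r ^ (2*k)" unfolding zz by (simp add: power_mult)
    finally show "z ^ n * (cnj (coeff p k) * cnj z ^ k) = cnj (coeff p k) * of_real r ^ (2*k) * z ^ (n - k)"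
      by (simp add: algebra_simps)
  qed
  finally show ?thesis unfolding Gr_fun_def n_def[symmetric] by (simp add: algebra_simps)
qed

lemma Gr_hol:
  assumes "g holomorphic_on UNIV"
  shows "Gr_fun p g r holomorphic_on UNIV"
proof -
  have "(\<lambda>z. z ^ degree p * g z
     + (\<Sum>k\<le>degree p. cnj (coeff p k) * of_real r ^ (2*k) * z ^ (degree p - k))) holomorphic_on UNIV"
    by (intro holomorphic_intros assms)
  then show ?thesis unfolding Gr_fun_def[abs_def] .
qed

lemma Gr_0:
  assumes "1 \<le> degree p"
  shows "Gr_fun p g r 0 = cnj (lead_coeff p) * of_real r ^ (2 * degree p)"
proof -
  define n where "n = degree p"
  have "(\<Sum>k\<le>n. cnj (coeff p k) * of_real r ^ (2*k) * (0::complex) ^ (n - k))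
      = (\<Sum>k\<le>n. if k = n then cnj (coeff p k) * of_real r ^ (2*k) else 0)"
    by (rule sum.cong) auto
  also have "\<dots> = cnj (coeff p n) * of_real r ^ (2*n)" by simp
  finally show ?thesis using assms unfolding Gr_fun_def n_def by simp
qed

lemma Gr_zero_lb:
  assumes holg: "g holomorphic_on UNIV" and n1: "1 \<le> degree p"
  obtains \<rho> where "0 < \<rho>" "\<And>r a. 1 \<le> r \<Longrightarrow> Gr_fun p g r a = 0 \<Longrightarrow> \<rho> \<le> norm a"
proof -
  define n where "n = degree p"
  obtain m where n_eq: "n = Suc m" using n1 unfolding n_def by (cases "degree p") auto
  have "compact (g ` cball 0 1)"
    by (intro compact_continuous_image holomorphic_on_imp_continuous_on holomorphic_on_subset[OF holg]) auto
  then obtain M where M: "0 < M" "\<And>z. z \<in> cball 0 1 \<Longrightarrow> norm (g z) \<le> M"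
    using compact_imp_bounded bounded_pos by (metis image_eqI)
  define S where "S = (\<Sum>k<n. norm (coeff p k))"
  have S0: "0 \<le> S" unfolding S_def by (simp add: sum_nonneg)
  define B where "B = M + S + 1"
  have B: "0 < B" unfolding B_def using M S0 by simp
  have cn: "coeff p n \<noteq> 0" unfolding n_def using n1 by (cases "p = 0") auto
  define \<rho> where "\<rho> = min 1 (norm (coeff p n) / B)"
  have \<rho>: "0 < \<rho>" unfolding \<rho>_def using cn B by simp
  show ?thesis
  proof (rule that[OF \<rho>])
    fix r :: real and a :: complex assume r: "1 \<le> r" and G0: "Gr_fun p g r a = 0"
    show "\<rho> \<le> norm a"
    proof (rule ccontr)
      assume "\<not> \<rho> \<le> norm a"
      then have a1: "norm a < 1" and aB: "norm a < norm (coeff p n) / B" unfolding \<rho>_def by auto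
      define T where "T = a ^ n * g a + (\<Sum>k<n. cnj (coeff p k) * of_real r ^ (2*k) * a ^ (n - k))"
      have "Gr_fun p g r a = T + cnj (coeff p n) * of_real r ^ (2*n)"
        unfolding Gr_fun_def T_def n_def[symmetric] by (simp add: lessThan_Suc_atMost[symmetric] n_eq)
      then have Teq: "norm T = norm (coeff p n) * r ^ (2*n)"
        using G0 r by (simp add: norm_mult norm_power eq_neg_iff_add_eq_0[symmetric] add_eq_0_iff2)
      have r2: "r ^ (2*k) \<le> r ^ (2*n)" if "k < n" for k using r that by (intro power_increasing) auto
      have t1: "norm (a ^ n * g a) \<le> norm a * M"
      proof -
        have "norm (a ^ n * g a) = norm a * norm a ^ m * norm (g a)" by (simp add: n_eq norm_mult norm_power)
        also have "\<dots> \<le> norm a * 1 * M"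
          using a1 M(2)[of a] by (intro mult_mono power_le_one) auto
        finally show ?thesis by simp
      qed
      have t2: "norm (cnj (coeff p k) * of_real r ^ (2*k) * a ^ (n - k)) \<le> norm a * (norm (coeff p k) * r ^ (2*n))"
        if "k < n" for k
      proof -
        have pa: "norm a ^ (n - k) \<le> norm a ^ 1"
          using that a1 by (intro power_decreasing) auto
        have "norm (cnj (coeff p k) * of_real r ^ (2*k) * a ^ (n - k))
           = norm (coeff p k) * r ^ (2*k) * norm a ^ (n - k)"
          using r by (simp add: norm_mult norm_power)
        also have "\<dots> \<le> norm (coeff p k) * r ^ (2*n) * norm a"
        proof (rule mult_mono)
          show "norm (coeff p k) * r ^ (2*k) \<le> norm (coeff p k) * r ^ (2*n)"
            using r2[OF that] by (intro mult_left_mono) auto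
        qed (use pa r in auto)
        finally show ?thesis by (simp add: algebra_simps)
      qed
      have "norm T \<le> norm (a ^ n * g a) + norm (\<Sum>k<n. cnj (coeff p k) * of_real r ^ (2*k) * a ^ (n - k))"
        unfolding T_def by (rule norm_triangle_ineq)
      also have "\<dots> \<le> norm a * M + (\<Sum>k<n. norm a * (norm (coeff p k) * r ^ (2*n)))"
        using t1 t2 by (intro add_mono order_trans[OF norm_sum sum_mono]) auto
      also have "\<dots> = norm a * (M + S * r ^ (2*n))"
        unfolding S_def by (simp add: sum_distrib_left[symmetric] sum_distrib_right[symmetric] algebra_simps)
      also have "\<dots> \<le> norm a * (B * r ^ (2*n))"
      proof -
        have "M \<le> M * r ^ (2*n)" using M r by (simp add: one_le_power)
        moreover have "B * r ^ (2*n) = M * r ^ (2*n) + S * r ^ (2*n) + r ^ (2*n)"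
          unfolding B_def by (simp add: algebra_simps)
        moreover have "0 \<le> r ^ (2*n)" using r by simp
        ultimately have "M + S * r ^ (2*n) \<le> B * r ^ (2*n)" by linarith
        then show ?thesis by (intro mult_left_mono) auto
      qed
      finally have "norm (coeff p n) * r ^ (2*n) \<le> norm a * B * r ^ (2*n)" using Teq by simp
      then have "norm (coeff p n) \<le> norm a * B" using r by simp
      then show False using aB B by (simp add: divide_simps)
    qed
  qed
qed


lemma norm_circlepath0: "norm (circlepath 0 r t) = \<bar>r\<bar>"
  by (simp add: circlepath norm_mult norm_exp_eq_Re)

lemma wind_const:
  fixes g :: "complex \<Rightarrow> complex"
  assumes holg: "g holomorphic_on UNIV" and R: "0 < R" and eps: "0 < \<epsilon>"
    and bd: "\<And>z. R \<le> norm z \<Longrightarrow> \<epsilon> \<le> norm (poly p z + cnj (g z))" and rR: "R \<le> r"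
  shows "winding_number ((\<lambda>z. poly p z + cnj (g z)) \<circ> circlepath 0 r) 0
       = winding_number ((\<lambda>z. poly p z + cnj (g z)) \<circ> circlepath 0 R) 0"
proof -
  define F where "F z = poly p z + cnj (g z)" for z
  define A where "A = {z::complex. R \<le> norm z}"
  have contF: "continuous_on UNIV F" unfolding F_def
    by (intro continuous_intros continuous_on_poly holomorphic_on_imp_continuous_on holg)
  have "homotopic_loops A (circlepath 0 R) (circlepath 0 r)"
  proof (rule homotopic_loops_linear)
    fix t :: real assume "t \<in> {0..1}"
    define e where "e = exp (2 * of_real pi * \<i> * of_real t)"
    have ne: "norm e = 1" unfolding e_def by (simp add: norm_exp_eq_Re)
    have cR: "circlepath 0 R t = of_real R * e" "circlepath 0 r t = of_real r * e"
      unfolding e_def circlepath by auto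
    show "closed_segment (circlepath 0 R t) (circlepath 0 r t) \<subseteq> A"
    proof
      fix x assume "x \<in> closed_segment (circlepath 0 R t) (circlepath 0 r t)"
      then obtain u where u: "0 \<le> u" "u \<le> 1" "x = (1 - u) *\<^sub>R (of_real R * e) + u *\<^sub>R (of_real r * e)"
        unfolding closed_segment_def cR by auto
      have xe: "x = of_real ((1 - u) * R + u * r) * e" using u(3) by (simp add: scaleR_conv_of_real algebra_simps)
      have "norm x = \<bar>(1 - u) * R + u * r\<bar>" unfolding xe norm_mult norm_of_real ne by simp
      moreover have "R \<le> (1 - u) * R + u * r"
      proof -
        have "u * R \<le> u * r" using u rR by (intro mult_left_mono) auto
        then show ?thesis by (simp add: algebra_simps)
      qed
      ultimately show "x \<in> A" unfolding A_def by simp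
    qed
  qed auto
  then have "homotopic_loops (-{0}) (F \<circ> circlepath 0 R) (F \<circ> circlepath 0 r)"
  proof (rule homotopic_loops_continuous_image)
    show "continuous_on A F" using contF by (rule continuous_on_subset) auto
    show "F \<in> A \<rightarrow> - {0}" using bd eps unfolding A_def F_def by force
  qed
  then show ?thesis unfolding F_def[abs_def] using winding_number_homotopic_loops by metis
qed

lemma Gr_LD:
  fixes g :: "complex \<Rightarrow> complex"
  assumes holg: "g holomorphic_on UNIV" and n1: "1 \<le> degree p" and r: "0 < r" and eps: "0 < \<epsilon>"
    and bd: "\<And>z. z \<in> sphere 0 r \<Longrightarrow> \<epsilon> \<le> norm (poly p z + cnj (g z))"
  shows "contour_integral (circlepath 0 r) (\<lambda>z. deriv (Gr_fun p g r) z / Gr_fun p g r z)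
       = 2 * pi * \<i> * (of_nat (degree p) - winding_number ((\<lambda>z. poly p z + cnj (g z)) \<circ> circlepath 0 r) 0)"
proof -
  define n where "n = degree p"
  obtain m where nm: "n = Suc m" using n1 unfolding n_def by (cases "degree p") auto
  define F where "F z = poly p z + cnj (g z)" for z
  define G where "G = Gr_fun p g r"
  define \<psi> where "\<psi> z = G z / z ^ n" for z
  define c where "c = circlepath (0::complex) r"
  define \<gamma> where "\<gamma> = F \<circ> c"
  have holG: "G holomorphic_on UNIV" unfolding G_def by (rule Gr_hol[OF holg])
  have Gsph: "G z = z ^ n * cnj (F z)" if "z \<in> sphere 0 r" for z
    using Gr_sphere[of z r p g] that unfolding G_def F_def n_def by simp
  have Fnz: "F z \<noteq> 0" if "z \<in> sphere 0 r" for z using bd[OF that] eps unfolding F_def by auto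
  have z0: "z \<noteq> 0" if "z \<in> sphere 0 r" for z using that r by auto
  have Gnz: "G z \<noteq> 0" if "z \<in> sphere 0 r" for z using Gsph[OF that] Fnz[OF that] z0[OF that] by simp
  have psph: "\<psi> z = cnj (F z)" if "z \<in> sphere 0 r" for z
    unfolding \<psi>_def using Gsph[OF that] z0[OF that] by simp
  have csph: "c t \<in> sphere 0 r" for t unfolding c_def using norm_circlepath0[of r t] r by simp
  have eqpath: "\<psi> \<circ> c = cnj \<circ> \<gamma>" unfolding \<gamma>_def using psph csph by (auto simp: fun_eq_iff)
  have pimc: "path_image c = sphere 0 r" unfolding c_def using r by simp
  have contF: "continuous_on UNIV F" unfolding F_def
    by (intro continuous_intros continuous_on_poly holomorphic_on_imp_continuous_on holg)
  have pathg: "path \<gamma>" unfolding \<gamma>_def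
    by (rule path_continuous_image) (auto simp: c_def intro: continuous_on_subset[OF contF])
  have g0: "0 \<notin> path_image \<gamma>" unfolding \<gamma>_def path_image_compose pimc using Fnz by auto
  have loopg: "pathfinish \<gamma> = pathstart \<gamma>" unfolding \<gamma>_def c_def by (simp add: pathfinish_compose pathstart_compose)
  obtain k where k: "winding_number \<gamma> 0 = of_int k"
    using integer_winding_number[OF pathg loopg g0] by (auto elim: Ints_cases)
  have W1: "winding_number (\<psi> \<circ> c) 0 = - winding_number \<gamma> 0"
    using winding_number_cnj[OF pathg g0] k unfolding eqpath by simp
  have hol\<psi>: "\<psi> holomorphic_on (-{0})" unfolding \<psi>_def
    by (intro holomorphic_intros holomorphic_on_subset[OF holG]) auto
  have pic: "path_image c \<subseteq> -{0}" using pimc r by auto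
  have valid: "valid_path (\<psi> \<circ> c)"
    by (rule valid_path_compose_holomorphic[OF _ hol\<psi>]) (use pic in \<open>auto simp: c_def\<close>)
  have p0: "0 \<notin> path_image (\<psi> \<circ> c)" unfolding eqpath path_image_compose using g0 by auto
  have W2: "winding_number (\<psi> \<circ> c) 0 = 1/(2*pi*\<i>) * contour_integral (\<psi> \<circ> c) (\<lambda>w. 1/(w - 0))"
    by (rule winding_number_valid_path[OF valid p0])
  have W3: "contour_integral (\<psi> \<circ> c) (\<lambda>w. 1/(w - 0)) = contour_integral c (\<lambda>w. deriv \<psi> w * (1/(\<psi> w - 0)))"
  proof (rule contour_integral_comp_analyticW[where s="-{0}"])
    show "\<psi> analytic_on - {0}"
      using hol\<psi> analytic_on_open[OF open_Compl[OF closed_singleton]] by blast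
  qed (use pic in \<open>auto simp: c_def\<close>)
  have dpsi: "deriv \<psi> w * (1/(\<psi> w - 0)) = deriv G w / G w - of_nat n * (1 / w)" if w: "w \<in> sphere 0 r" for w
  proof -
    have wn: "w ^ n \<noteq> 0" using z0[OF w] by simp
    have dG: "(G has_field_derivative deriv G w) (at w)"
      using holG by (simp add: holomorphic_derivI)
    have dP: "((\<lambda>x. x ^ n) has_field_derivative of_nat n * (1 * w ^ (n - Suc 0))) (at w)"
      by (rule DERIV_power[OF DERIV_ident])
    have "(\<psi> has_field_derivative (deriv G w * w ^ n - G w * (of_nat n * (1 * w ^ (n - Suc 0)))) / (w ^ n * w ^ n)) (at w)"
      unfolding \<psi>_def[abs_def] by (rule DERIV_divide[OF dG dP wn])
    then have "deriv \<psi> w = (deriv G w * w ^ n - G w * (of_nat n * (1 * w ^ (n - Suc 0)))) / (w ^ n * w ^ n)"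
      by (rule DERIV_imp_deriv)
    note eq = this
    have psiw: "\<psi> w = G w / w ^ n" by (simp add: \<psi>_def)
    show ?thesis unfolding eq psiw using Gnz[OF w] z0[OF w]
      by (simp add: nm field_simps)
  qed
  have int1: "(\<lambda>z. deriv G z / G z) contour_integrable_on c"
    unfolding c_def using LD_integrable[OF holG Gnz] r by simp
  have int2: "(\<lambda>w. 1 / w) contour_integrable_on c"
    unfolding c_def using r by (intro contour_integrable_continuous_circlepath continuous_intros) auto
  have ci: "contour_integral c (\<lambda>w. 1 / (w - 0)) = 2 * pi * \<i>"
    unfolding c_def using contour_integral_circlepath[OF r, of 0] by simp
  have "contour_integral c (\<lambda>w. deriv \<psi> w * (1/(\<psi> w - 0)))
      = contour_integral c (\<lambda>w. deriv G w / G w - of_nat n * (1 / w))"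
    by (rule contour_integral_eq) (use dpsi pimc in auto)
  also have "\<dots> = contour_integral c (\<lambda>w. deriv G w / G w) - of_nat n * contour_integral c (\<lambda>w. 1 / w)"
    using contour_integral_diff[OF int1 contour_integrable_lmul[OF int2, of "of_nat n"]]
      contour_integral_lmul[OF int2, of "of_nat n"] by simp
  finally have "contour_integral c (\<lambda>w. deriv \<psi> w * (1/(\<psi> w - 0)))
      = contour_integral c (\<lambda>w. deriv G w / G w) - of_nat n * (2 * pi * \<i>)" using ci by simp
  then have "- winding_number \<gamma> 0 = 1/(2*pi*\<i>) * (contour_integral c (\<lambda>w. deriv G w / G w) - of_nat n * (2 * pi * \<i>))"
    using W1 W2 W3 by simp
  then have "contour_integral c (\<lambda>w. deriv G w / G w) = 2 * pi * \<i> * (of_nat n - winding_number \<gamma> 0)"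
    by (simp add: field_simps)
  then show ?thesis unfolding c_def G_def \<gamma>_def F_def[abs_def] n_def .
qed





lemma main_degpos:
  fixes g :: "complex \<Rightarrow> complex" and p :: "complex poly"
  assumes holg: "g holomorphic_on UNIV" and n1: "1 \<le> degree p" and eps: "0 < \<epsilon>"
    and bd: "\<And>z. R \<le> norm z \<Longrightarrow> \<epsilon> \<le> norm (poly p z + cnj (g z))"
  shows "is_polynomial_fun g"
proof -
  define R' where "R' = max R 2"
  have R': "0 < R'" "2 \<le> R'" unfolding R'_def by auto
  have bd': "\<epsilon> \<le> norm (poly p z + cnj (g z))" if "R' \<le> norm z" for z
    using bd[of z] that unfolding R'_def by simp
  define n where "n = degree p"
  define L where "L = norm (lead_coeff p)"
  define W0 where "W0 = winding_number ((\<lambda>z. poly p z + cnj (g z)) \<circ> circlepath 0 R') 0"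
  have sph: "\<epsilon> \<le> norm (poly p z + cnj (g z))" if "r \<ge> R'" "z \<in> sphere 0 r" for r z
    using bd'[of z] that by simp
  have Gsph: "\<epsilon> * r ^ n \<le> norm (Gr_fun p g r z)" if "r \<ge> R'" "z \<in> sphere 0 r" for r z
  proof -
    have "Gr_fun p g r z = z ^ n * cnj (poly p z + cnj (g z))"
      using Gr_sphere[of z r p g] that unfolding n_def by simp
    then have "norm (Gr_fun p g r z) = norm z ^ n * norm (cnj (poly p z + cnj (g z)))"
      by (simp only: norm_mult norm_power)
    then have "norm (Gr_fun p g r z) = r ^ n * norm (poly p z + cnj (g z))"
      using that by (simp only: complex_mod_cnj) simp
    moreover have "0 \<le> r ^ n" using that R' by simp
    ultimately show ?thesis using sph[OF that] by (metis mult.commute mult_left_mono)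
  qed
  have Gnz: "Gr_fun p g r z \<noteq> 0" if "r \<ge> R'" "z \<in> sphere 0 r" for r z
  proof -
    have "0 < \<epsilon> * r ^ n" using eps that R' by simp
    then show ?thesis using Gsph[OF that] by auto
  qed
  have LD: "contour_integral (circlepath 0 r) (\<lambda>z. deriv (Gr_fun p g r) z / Gr_fun p g r z)
       = 2 * pi * \<i> * (of_nat n - W0)" if r: "r \<ge> R'" for r
  proof -
    have "contour_integral (circlepath 0 r) (\<lambda>z. deriv (Gr_fun p g r) z / Gr_fun p g r z)
       = 2 * pi * \<i> * (of_nat (degree p) - winding_number ((\<lambda>z. poly p z + cnj (g z)) \<circ> circlepath 0 r) 0)"
      using R' r by (intro Gr_LD[OF holg n1 _ eps sph[OF r]]) auto
    also have "winding_number ((\<lambda>z. poly p z + cnj (g z)) \<circ> circlepath 0 r) 0 = W0"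
      unfolding W0_def using R' r by (intro wind_const[OF holg _ eps bd']) auto
    finally show ?thesis unfolding n_def .
  qed
  obtain K where K: "contour_integral (circlepath 0 R') (\<lambda>z. deriv (Gr_fun p g R') z / Gr_fun p g R' z)
      = 2 * pi * \<i> * of_nat K"
    using arg_count[OF Gr_hol[OF holg] R'(1) Gnz[of R']] by blast
  have LDK: "contour_integral (circlepath 0 r) (\<lambda>z. deriv (Gr_fun p g r) z / Gr_fun p g r z)
      = 2 * pi * \<i> * of_nat K" if r: "r \<ge> R'" for r
    using LD[OF r] LD[of R'] K by simp
  obtain \<rho> where \<rho>: "0 < \<rho>" "\<And>r a. 1 \<le> r \<Longrightarrow> Gr_fun p g r a = 0 \<Longrightarrow> \<rho> \<le> norm a"
    using Gr_zero_lb[OF holg n1] by blast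
  define C1 where "C1 = 2^(3*K) * L^3 / (\<rho>^(3*K) * \<epsilon>^2)"
  define Sall where "Sall = (\<Sum>k\<le>n. norm (coeff p k))"
  define D where "D = 3*K + 4*n"
  have Gbound: "norm (Gr_fun p g r z) \<le> C1 * r ^ D" if r: "r \<ge> R'" and z: "norm z \<le> r/2" for r z
  proof -
    have r0: "0 < r" "1 \<le> r" using r R' by auto
    obtain as E where fac: "length as = K" "\<forall>a\<in>set as. norm a < r \<and> Gr_fun p g r a = 0"
      "E holomorphic_on UNIV" "\<forall>z\<in>cball 0 r. E z \<noteq> 0" "\<forall>z. Gr_fun p g r z = (\<Prod>a\<leftarrow>as. (z - a)) * E z"
      using factor_zeros[OF Gr_hol[OF holg] r0(1) Gnz[OF r] LDK[OF r]] by blast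
    have mu: "0 < \<epsilon> * r ^ n" using eps r0 by simp
    have cb: "norm (Gr_fun p g r z) \<le> (2*r)^(3 * length as) * norm (E 0)^3 / (\<epsilon> * r ^ n)^2"
      by (rule core_bound[OF fac(3) r0(1) mu _ fac(4) fac(5) Gsph[OF r] z]) (use fac(2) in force)
    have P0: "\<rho> ^ K \<le> norm (\<Prod>a\<leftarrow>as. (0 - a))"
      unfolding fac(1)[symmetric]
      by (rule prod_list_norm_ge) (use fac(2) \<rho> r0 in auto)
    have G0: "norm (Gr_fun p g r 0) = L * r ^ (2*n)"
      unfolding Gr_0[OF n1] L_def n_def using r0 by (simp add: norm_mult norm_power)
    have rK: "0 < \<rho> ^ K" using \<rho> by simp
    have E0: "norm (E 0) \<le> L * r ^ (2*n) / \<rho> ^ K"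
    proof -
      have "L * r ^ (2*n) = norm (\<Prod>a\<leftarrow>as. (0 - a)) * norm (E 0)"
        using G0 fac(5) by (metis norm_mult)
      moreover have "\<rho> ^ K * norm (E 0) \<le> norm (\<Prod>a\<leftarrow>as. (0 - a)) * norm (E 0)"
        using P0 by (intro mult_right_mono) auto
      ultimately show ?thesis using rK by (simp add: field_simps)
    qed
    have "norm (E 0)^3 \<le> (L * r ^ (2*n) / \<rho> ^ K)^3"
      using E0 by (intro power_mono) auto
    then have "norm (Gr_fun p g r z) \<le> (2*r)^(3*K) * (L * r ^ (2*n) / \<rho> ^ K)^3 / (\<epsilon> * r ^ n)^2"
      using cb fac(1) r0 mu by (smt (verit) divide_right_mono mult_left_mono zero_le_power zero_le_power2)
    also have "\<dots> = C1 * r ^ D"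
    proof -
      have e1: "(2*r)^(3*K) = 2^(3*K) * r^(3*K)" by (simp add: power_mult_distrib)
      have x3: "(r^(2*n))^3 = r^(2*n) * r^(4*n)"
        by (simp add: power_mult[symmetric] power_add[symmetric])
      have e2: "(L * r^(2*n) / \<rho>^K)^3 = L^3 * (r^(2*n) * r^(4*n)) / \<rho>^(3*K)"
      proof -
        have y3: "(\<rho>^K)^3 = \<rho>^(3*K)" by (simp add: power_mult[symmetric] mult.commute)
        show ?thesis by (simp only: power_divide power_mult_distrib x3 y3)
      qed
      have e3: "(\<epsilon> * r^n)^2 = \<epsilon>^2 * r^(2*n)"
        by (simp add: power_mult_distrib power_mult[symmetric] mult.commute)
      have e4: "r^D = r^(3*K) * r^(4*n)" unfolding D_def by (simp add: power_add)
      have pos: "0 < r^(2*n)" "0 < \<rho>^(3*K)" "0 < \<epsilon>^2" using r0 \<rho> eps by auto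
      show ?thesis unfolding e1 e2 e3 e4 C1_def using pos by (simp add: field_simps)
    qed
    finally show ?thesis .
  qed
  have gb: "norm (g z) \<le> ((C1 + Sall) * 2 ^ D) * norm z ^ D" if z: "R'/2 \<le> norm z" for z
  proof -
    define r where "r = 2 * norm z"
    have r: "r \<ge> R'" "1 \<le> r" using z R' unfolding r_def by auto
    have z1: "1 \<le> norm z" using z R' by simp
    have zr: "norm z \<le> r" unfolding r_def by simp
    have eqG: "z ^ n * g z = Gr_fun p g r z - (\<Sum>k\<le>n. cnj (coeff p k) * of_real r ^ (2*k) * z ^ (n - k))"
      unfolding Gr_fun_def n_def by simp
    have Sb: "norm (\<Sum>k\<le>n. cnj (coeff p k) * of_real r ^ (2*k) * z ^ (n - k)) \<le> Sall * r ^ D"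
    proof -
      have "norm (\<Sum>k\<le>n. cnj (coeff p k) * of_real r ^ (2*k) * z ^ (n - k))
          \<le> (\<Sum>k\<le>n. norm (coeff p k) * r ^ D)"
      proof (rule order_trans[OF norm_sum sum_mono])
        fix k assume k: "k \<in> {..n}"
        have "norm z ^ (n - k) \<le> r ^ (n - k)" using zr by (intro power_mono) auto
        then have "r ^ (2*k) * norm z ^ (n - k) \<le> r ^ (2*k) * r ^ (n - k)"
          using r by (intro mult_left_mono) auto
        also have "\<dots> = r ^ (2*k + (n - k))" by (simp add: power_add)
        also have "\<dots> \<le> r ^ D" using r k unfolding D_def by (intro power_increasing) auto
        finally have "r ^ (2*k) * norm z ^ (n - k) \<le> r ^ D" .
        then show "norm (cnj (coeff p k) * of_real r ^ (2*k) * z ^ (n - k)) \<le> norm (coeff p k) * r ^ D"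
          using r by (simp add: norm_mult norm_power mult.assoc mult_left_mono)
      qed
      also have "\<dots> = Sall * r ^ D" unfolding Sall_def by (simp add: sum_distrib_right)
      finally show ?thesis .
    qed
    have "norm (g z) \<le> norm (z ^ n * g z)"
    proof -
      have "1 \<le> norm z ^ n" using z1 by (simp add: one_le_power)
      then have "1 * norm (g z) \<le> norm z ^ n * norm (g z)" by (intro mult_right_mono) auto
      then show ?thesis by (simp add: norm_mult norm_power)
    qed
    also have "\<dots> \<le> norm (Gr_fun p g r z) + Sall * r ^ D"
    proof -
      have "norm (z ^ n * g z) \<le> norm (Gr_fun p g r z) + norm (\<Sum>k\<le>n. cnj (coeff p k) * of_real r ^ (2*k) * z ^ (n - k))"
        unfolding eqG by (rule norm_triangle_ineq4)
      then show ?thesis using Sb by linarith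
    qed
    also have "\<dots> \<le> C1 * r ^ D + Sall * r ^ D"
    proof -
      have "norm z \<le> r / 2" unfolding r_def by simp
      then have "norm (Gr_fun p g r z) \<le> C1 * r ^ D" by (rule Gbound[OF r(1)])
      then show ?thesis by linarith
    qed
    also have "\<dots> = ((C1 + Sall) * 2 ^ D) * norm z ^ D"
      unfolding r_def by (simp add: power_mult_distrib algebra_simps)
    finally show ?thesis .
  qed
  show ?thesis by (rule poly_growth_imp_poly[OF holg gb])
qed




lemma not_cluster_bound:
  fixes F :: "complex \<Rightarrow> complex"
  assumes "\<zeta> \<notin> cluster_set_infty F"
  shows "\<exists>\<epsilon>>0. \<exists>R. \<forall>z. R \<le> norm z \<longrightarrow> \<epsilon> \<le> norm (F z - \<zeta>)"
proof (rule ccontr)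
  assume "\<not> ?thesis"
  then have ex: "\<exists>z. R \<le> norm z \<and> norm (F z - \<zeta>) < \<epsilon>" if "0 < \<epsilon>" for \<epsilon> R
    using that by (meson not_le)
  define zs where "zs n = (SOME z. real n \<le> norm z \<and> norm (F z - \<zeta>) < inverse (real (Suc n)))" for n
  have zs: "real n \<le> norm (zs n) \<and> norm (F (zs n) - \<zeta>) < inverse (real (Suc n))" for n
    unfolding zs_def by (rule someI_ex) (rule ex, simp)
  have lim1: "filterlim (\<lambda>n. norm (zs n)) at_top sequentially"
    by (rule filterlim_at_top_mono[OF filterlim_real_sequentially]) (use zs in auto)
  have "(\<lambda>n. F (zs n) - \<zeta>) \<longlonglongrightarrow> 0"
  proof (rule Lim_null_comparison)
    show "\<forall>\<^sub>F n in sequentially. norm (F (zs n) - \<zeta>) \<le> inverse (real (Suc n))"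
      using zs by (intro always_eventually allI less_imp_le) blast
    show "(\<lambda>n. inverse (real (Suc n))) \<longlonglongrightarrow> 0" by (rule LIMSEQ_inverse_real_of_nat)
  qed
  then have "(\<lambda>n. F (zs n)) \<longlonglongrightarrow> \<zeta>" by (rule LIM_zero_cancel)
  then have "\<zeta> \<in> cluster_set_infty F" unfolding cluster_set_infty_def using lim1 by blast
  with assms show False by simp
qed

lemma cluster_UNIV:
  fixes g :: "complex \<Rightarrow> complex" and p :: "complex poly"
  assumes holg: "g holomorphic_on UNIV" and np: "\<not> is_polynomial_fun g"
  shows "cluster_set_infty (\<lambda>z. poly p z + cnj (g z)) = UNIV"
proof (rule ccontr)
  assume "cluster_set_infty (\<lambda>z. poly p z + cnj (g z)) \<noteq> UNIV"
  then obtain \<zeta> where "\<zeta> \<notin> cluster_set_infty (\<lambda>z. poly p z + cnj (g z))" by blast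
  then obtain \<epsilon> R where eps: "0 < \<epsilon>" and bd: "\<And>z. R \<le> norm z \<Longrightarrow> \<epsilon> \<le> norm (poly p z + cnj (g z) - \<zeta>)"
    using not_cluster_bound by blast
  define q where "q = p - [:\<zeta>:]"
  have pq: "poly q z + cnj (g z) = poly p z + cnj (g z) - \<zeta>" for z unfolding q_def by simp
  have bd': "\<epsilon> \<le> norm (poly q z + cnj (g z))" if "R \<le> norm z" for z
    using bd[OF that] unfolding pq[symmetric] .
  have "is_polynomial_fun g"
  proof (cases "degree q = 0")
    case True
    then have "poly q z = coeff q 0" for z by (simp add: poly_altdef True)
    then show ?thesis using main_deg0[OF holg eps, of R "coeff q 0"] bd' by simp
  next
    case False
    then show ?thesis using main_degpos[OF holg _ eps bd'] by simp
  qed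
  with np show False by simp
qed

lemma cluster_cnj:
  fixes F :: "complex \<Rightarrow> complex"
  assumes "cnj \<zeta> \<in> cluster_set_infty (\<lambda>z. cnj (F z))"
  shows "\<zeta> \<in> cluster_set_infty F"
proof -
  obtain zs :: "nat \<Rightarrow> complex" where zs: "filterlim (\<lambda>n. norm (zs n)) at_top sequentially"
    "(\<lambda>n. cnj (F (zs n))) \<longlonglongrightarrow> cnj \<zeta>"
    using assms unfolding cluster_set_infty_def by blast
  have "(\<lambda>n. cnj (cnj (F (zs n)))) \<longlonglongrightarrow> cnj (cnj \<zeta>)" by (rule tendsto_cnj[OF zs(2)])
  then have "(\<lambda>n. F (zs n)) \<longlonglongrightarrow> \<zeta>" by simp
  then show ?thesis unfolding cluster_set_infty_def using zs(1) by blast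
qed

theorem corollary5p13:
  fixes h g :: "complex \<Rightarrow> complex"
  assumes "h holomorphic_on UNIV" and "g holomorphic_on UNIV"
  assumes "interior ((\<lambda>z. h z + cnj (g z)) ` crit_set (\<lambda>z. h z + cnj (g z))
             \<union> cluster_set_infty (\<lambda>z. h z + cnj (g z))) = {}"
  shows "(is_polynomial_fun h \<and> is_polynomial_fun g)
       \<or> (\<not> is_polynomial_fun h \<and> \<not> is_polynomial_fun g)"
proof (rule ccontr)
  assume mixed: "\<not> ?thesis"
  have "cluster_set_infty (\<lambda>z. h z + cnj (g z)) = UNIV"
  proof (cases "is_polynomial_fun h")
    case True
    then obtain p where hp: "h = poly p" unfolding is_polynomial_fun_def by blast
    have "\<not> is_polynomial_fun g" using mixed True by blast
    then show ?thesis using cluster_UNIV[OF assms(2), of p] hp by simp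
  next
    case False
    then have "is_polynomial_fun g" using mixed by blast
    then obtain q where gq: "g = poly q" unfolding is_polynomial_fun_def by blast
    have CU: "cluster_set_infty (\<lambda>z. poly q z + cnj (h z)) = UNIV"
      by (rule cluster_UNIV[OF assms(1) False])
    have "\<zeta> \<in> cluster_set_infty (\<lambda>z. h z + cnj (g z))" for \<zeta>
    proof (rule cluster_cnj)
      have "(\<lambda>z. cnj (h z + cnj (g z))) = (\<lambda>z. poly q z + cnj (h z))"
        unfolding gq by (auto simp: fun_eq_iff)
      then show "cnj \<zeta> \<in> cluster_set_infty (\<lambda>z. cnj (h z + cnj (g z)))" using CU by simp
    qed
    then show ?thesis by auto
  qed
  then have "interior ((\<lambda>z. h z + cnj (g z)) ` crit_set (\<lambda>z. h z + cnj (g z))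
             \<union> cluster_set_infty (\<lambda>z. h z + cnj (g z))) = UNIV" by simp
  with assms(3) show False by simp
qed


end
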